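(* Let $\vec{k}=(k_1,\dots,k_\ell)$ be any vector of positive integers and let $a$ be any positive integer. Then the polynomial $$\widetilde{C}_{^a\mathcal{K}}(q,t)=\sum_{\pi\in\mathcal{D}_{^a\mathcal{K}}} q^{\mathrm{area}(\pi)}t^{\mathrm{depth}(\pi)}$$ is $q,t$-symmetric, i.e. $\widetilde{C}_{^a\mathcal{K}}(q,t)=\widetilde{C}_{^a\mathcal{K}}(t,q)$.
   Context: For a vector $\vec{u}=(u_1,\dots,u_m)$ of positive integers put $|\vec u|=u_1+\cdots+u_m$ and $N=|\vec u|+m$. A $\vec u$-Dyck path is a word $\pi=\pi_1\cdots\pi_N$ containing the letters $S^{u_1},S^{u_2},\dots,S^{u_m}$ exactly once each and in this order from left to right, together with $|\vec u|$ letters $W$, such that all starting ranks are nonnegative, where the starting ranks are $r_1=0$, $r_{i+1}=r_i+u_j$ if $\pi_i=S^{u_j}$ and $r_{i+1}=r_i-1$ if $\pi_i=W$. (Equivalently: a lattice path from $(0,0)$ to $(N,0)$ with up steps $(1,u_1),\dots,(1,u_m)$ in this order and down steps $(1,-1)$, never going below the horizontal axis.) $\mathcal{D}_{\vec u}$ denotes the set of such paths. The area sequence is $(a_1,\dots,a_m)$ with $a_j$ the starting rank of the letter $S^{u_j}$, and $\mathrm{area}(\pi)=a_1+\cdots+a_m$. Filling algorithm $\eta_*$: consider a tableau of $m$ top-justified columns, column $i$ having $u_i+1$ cells. Place $1$ at the top of column $1$. For $i=2,\dots,N$: call an entry active if it is currently the bottom entry of a column $i'$ that does not yet contain $u_{i'}+1$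 entries; if $\pi_i=W$, place $i$ immediately below the largest active entry; otherwise place $i$ at the top of the first empty column. The result is $\eta_*(\pi)$. Ranking algorithm $\gamma_*$: in the tableau of the same shape, give column $1$ the ranks $0,1,\dots,u_1$ from top to bottom; for $i\ge 2$, if the top entry of column $i$ of $\eta_*(\pi)$ is $A+1$ and $A$ has rank $\alpha$, give column $i$ the ranks $\alpha,\alpha+1,\dots,\alpha+u_i$ from top to bottom. The depth labeling sequence $(d_1,\dots,d_m)$ is the first row of the ranking tableau, and $\mathrm{depth}(\pi)=d_1+\cdots+d_m$. For $\vec k=(k_1,\dots,k_\ell)$, $\mathcal{K}$ is the set of all distinct rearrangements of $\vec k$, ${}^a\mathcal{K}=\{(a,j_1,\dots,j_\ell):(j_1,\dots,j_\ell)\in\mathcal{K}\}$, and $\mathcal{D}_{^a\mathcal{K}}$ is the union of $\mathcal{D}_{\vec u}$ over $\vec u\in{}^a\mathcal{K}$. *)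

theory Defs
  imports "HOL-Library.Multiset"
begin

text \<open>Letters of a u-Dyck word: \<open>S n\<close> is the up letter S^n, \<open>W\<close> the down letter.\<close>
datatype letter = S nat | W

fun letter_step :: "letter \<Rightarrow> int" where
  "letter_step (S n) = int n"
| "letter_step W = -1"

definition start_rank :: "letter list \<Rightarrow> nat \<Rightarrow> int" where
  "start_rank w i = (\<Sum>x\<leftarrow>take i w. letter_step x)"

fun up_size :: "letter \<Rightarrow> nat option" where
  "up_size (S n) = Some n"
| "up_size W = None"

definition ups :: "letter list \<Rightarrow> nat list" where
  "ups w = map the (filter (\<lambda>x. x \<noteq> None) (map up_size w))"

definition dyck_paths :: "nat list \<Rightarrow> letter list set" where
  "dyck_paths u = {w. ups w = u \<and> length (filter (\<lambda>x. x = W) w) = sum_list u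
                     \<and> (\<forall>i < length w. start_rank w i \<ge> 0)}"

definition area :: "letter list \<Rightarrow> int" where
  "area w = (\<Sum>i<length w. if w ! i = W then 0 else start_rank w i)"

text \<open>Filling algorithm. A tableau is a list of columns, each column the list of its
  entries from top to bottom; column \<open>j\<close> (0-indexed) has \<open>us ! j + 1\<close> cells.\<close>
definition active_cols :: "nat list \<Rightarrow> nat list list \<Rightarrow> nat set" where
  "active_cols us cols = {j. j < length cols \<and> cols ! j \<noteq> [] \<and> length (cols ! j) < us ! j + 1}"

definition place_W :: "nat list \<Rightarrow> nat list list \<Rightarrow> nat \<Rightarrow> nat list list" where
  "place_W us cols i =
     (let J = active_cols us cols;
          j = (SOME j. j \<in> J \<and> (\<forall>j'\<in>J. last (cols ! j') \<le> last (cols ! j)))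
      in cols[j := cols ! j @ [i]])"

definition place_S :: "nat list list \<Rightarrow> nat \<Rightarrow> nat list list" where
  "place_S cols i = (let j = (LEAST j. j < length cols \<and> cols ! j = []) in cols[j := [i]])"

definition filling :: "letter list \<Rightarrow> nat list list" where
  "filling w =
     (let us = ups w in
      fold (\<lambda>i cols. if w ! (i - 1) = W then place_W us cols i else place_S cols i)
           [2..<length w + 1]
           ((replicate (length us) [])[0 := [1]]))"

text \<open>Column 0 has ranks 0,1,...; column \<open>j > 0\<close> with top entry \<open>A+1\<close> has ranks
  \<open>\<alpha>, \<alpha>+1, ...\<close> where \<open>\<alpha>\<close> is the rank of \<open>A\<close>.\<close>
function entry_rank :: "nat list list \<Rightarrow> nat \<Rightarrow> nat" where
  "entry_rank cols e =
     (let j = (SOME j. j < length cols \<and> e \<in> set (cols ! j));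
          r = (LEAST r. r < length (cols ! j) \<and> cols ! j ! r = e)
      in if e = 0 \<or> j = 0 \<or> \<not> hd (cols ! j) \<le> e then r
         else entry_rank cols (hd (cols ! j) - 1) + r)"
  by auto
termination by (relation "measure snd") auto

text \<open>Depth labeling sequence: the ranks of the first row.\<close>
definition depth_seq :: "letter list \<Rightarrow> nat list" where
  "depth_seq w = (let cols = filling w in
     map (\<lambda>j. if j = 0 then 0 else entry_rank cols (hd (cols ! j) - 1)) [0..<length cols])"

definition depth :: "letter list \<Rightarrow> nat" where
  "depth w = sum_list (depth_seq w)"

definition aK :: "nat \<Rightarrow> nat list \<Rightarrow> nat list set" where
  "aK a k = {a # js | js. mset js = mset k}"

definition dyck_paths_aK :: "nat \<Rightarrow> nat list \<Rightarrow> letter list set" where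
  "dyck_paths_aK a k = (\<Union>u\<in>aK a k. dyck_paths u)"

end

theory Submission
  imports Defs
begin

datatype tree = Node nat "tree option list"

fun word :: "tree \<Rightarrow> letter list" and wo :: "tree option \<Rightarrow> letter list"
  and wss :: "tree option list \<Rightarrow> letter list" where
  "word (Node u []) = [S u]"
| "word (Node u (c # cs)) = S u # wo c @ wss cs"
| "wo None = []"
| "wo (Some t) = word t"
| "wss [] = []"
| "wss (c # cs) = W # wo c @ wss cs"

fun wf :: "tree \<Rightarrow> bool" and wfo :: "tree option \<Rightarrow> bool" and wfs :: "tree option list \<Rightarrow> bool" where
  "wf (Node u cs) = (0 < u \<and> length cs = Suc u \<and> wfs cs)"
| "wfo None = True"
| "wfo (Some t) = wf t"
| "wfs [] = True"
| "wfs (c # cs) = (wfo c \<and> wfs cs)"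

fun pre :: "tree \<Rightarrow> nat list" and preo :: "tree option \<Rightarrow> nat list" and pres :: "tree option list \<Rightarrow> nat list" where
  "pre (Node u cs) = u # pres cs"
| "preo None = []"
| "preo (Some t) = pre t"
| "pres [] = []"
| "pres (c # cs) = preo c @ pres cs"

fun refl :: "tree \<Rightarrow> tree" where
  "refl (Node u cs) = Node u (rev (map (map_option refl) cs))"

definition ps :: "letter list \<Rightarrow> int" where "ps xs = sum_list (map letter_step xs)"

lemma ps_simps[simp]: "ps [] = 0" "ps (x # xs) = letter_step x + ps xs" "ps (xs @ ys) = ps xs + ps ys"
  by (auto simp: ps_def)

lemma ps_take_append: "ps (take i (xs @ ys)) = ps (take i xs) + ps (take (i - length xs) ys)"
  by simp

lemma word_ps:
  "wf t \<Longrightarrow> ps (word t) = 0 \<and> (\<forall>i. ps (take i (word t)) \<ge> 0)"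
  "wfo c \<Longrightarrow> ps (wo c) = 0 \<and> (\<forall>i. ps (take i (wo c)) \<ge> 0)"
  "wfs cs \<Longrightarrow> ps (wss cs) = - int (length cs) \<and> (\<forall>i. ps (take i (wss cs)) \<ge> - int (length cs))"
proof (induction t and c and cs rule: word_wo_wss.induct)
  case (1 u)
  then show ?case by simp
next
  case (2 u c cs)
  have "ps (take i (word (Node u (c # cs)))) \<ge> 0" for i
  proof (cases i)
    case (Suc j)
    have "ps (take j (wo c)) \<ge> 0" "ps (take (j - length (wo c)) (wss cs)) \<ge> - int u"
      using 2 by auto
    then show ?thesis using Suc by simp
  qed simp
  then show ?case using 2 by simp
next
  case (6 c cs)
  have "ps (take i (wss (c # cs))) \<ge> - int (length (c # cs))" for i
  proof (cases i)
    case (Suc j)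
    have "ps (take j (wo c)) \<ge> 0" "ps (take (j - length (wo c)) (wss cs)) \<ge> - int (length cs)"
      using 6 by auto
    then show ?thesis using Suc by simp
  qed simp
  then show ?case using 6 by simp
qed auto

lemma ups_simps[simp]: "ups [] = []" "ups (S n # xs) = n # ups xs" "ups (W # xs) = ups xs"
  "ups (xs @ ys) = ups xs @ ups ys"
  by (auto simp: ups_def)

lemma word_ups:
  "ups (word t) = pre t" "ups (wo c) = preo c" "ups (wss cs) = pres cs"
  by (induction t and c and cs rule: word_wo_wss.induct) auto

lemma word_countW:
  "wf t \<Longrightarrow> length (filter (\<lambda>x. x = W) (word t)) = sum_list (pre t)"
  "wfo c \<Longrightarrow> length (filter (\<lambda>x. x = W) (wo c)) = sum_list (preo c)"
  "wfs cs \<Longrightarrow> length (filter (\<lambda>x. x = W) (wss cs)) = length cs + sum_list (pres cs)"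
  by (induction t and c and cs rule: word_wo_wss.induct) auto

lemma start_rank_ps: "start_rank w i = ps (take i w)"
  by (simp add: start_rank_def ps_def)

lemma word_dyck: "wf t \<Longrightarrow> word t \<in> dyck_paths (pre t)"
  using word_ps(1)[of t] word_countW(1)[of t]
  by (simp add: dyck_paths_def word_ups start_rank_ps)

lemma step_nonneg: "x \<noteq> W \<Longrightarrow> letter_step x \<ge> 0"
  by (cases x) auto

lemma parse_gen:
  "(\<forall>x\<in>set w. x \<noteq> S 0) \<Longrightarrow> (\<forall>i. ps (take i w) \<ge> - int n) \<Longrightarrow> ps w = - int n
   \<Longrightarrow> \<exists>c cs. wfo c \<and> wfs cs \<and> length cs = n \<and> w = wo c @ wss cs"
proof (induction "length w" arbitrary: w n rule: less_induct)
  case less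
  show ?case
  proof (cases "n = 0")
    case True
    show ?thesis
    proof (cases w)
      case Nil
      then show ?thesis using True by (intro exI[of _ None] exI[of _ "[]"]) auto
    next
      case (Cons x w')
      have "ps (take 1 w) \<ge> 0" using less.prems True by auto
      then have "x \<noteq> W" using Cons by auto
      then obtain u where x: "x = S u" by (cases x) auto
      with less.prems Cons have u: "u > 0" by (cases u) auto
      have "ps (take (Suc i) w) \<ge> 0" for i using less.prems True by auto
      then have "ps (take i w') \<ge> - int u" for i using Cons x by (smt (verit) letter_step.simps(1) ps_simps(2) take_Suc_Cons)
      moreover have "ps w' = - int u" using less.prems True Cons x by auto
      moreover have "\<forall>x\<in>set w'. x \<noteq> S 0" using less.prems Cons by auto
      ultimately obtain c cs where "wfo c" "wfs cs" "length cs = u" "w' = wo c @ wss cs"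
        using less.hyps[of w' u] Cons by auto
      then show ?thesis using x Cons u True
        by (intro exI[of _ "Some (Node u (c # cs))"] exI[of _ "[]"]) auto
    qed
  next
    case False
    have ex: "\<exists>j. ps (take j w) < 0" using less.prems False by (intro exI[of _ "length w"]) auto
    define j where "j = (LEAST j. ps (take j w) < 0)"
    have j1: "ps (take j w) < 0" unfolding j_def using LeastI_ex[OF ex] .
    have j2: "i < j \<Longrightarrow> ps (take i w) \<ge> 0" for i unfolding j_def using not_less_Least by fastforce
    have jpos: "j > 0" using j1 by (cases j) auto
    have jle: "j \<le> length w"
    proof (rule ccontr)
      assume "\<not> j \<le> length w"
      then have "ps (take (length w) w) \<ge> 0" using j2 by (meson not_le_imp_less)
      then show False using less.prems False by simp
    qed
    have tk: "take j w = take (j - 1) w @ [w ! (j - 1)]"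
      using jpos jle by (metis Suc_diff_1 Suc_le_lessD take_Suc_conv_app_nth)
    have a: "ps (take (j - 1) w) \<ge> 0" using j2 jpos by auto
    have wj: "w ! (j - 1) = W"
    proof (rule ccontr)
      assume "w ! (j - 1) \<noteq> W"
      then have "letter_step (w ! (j - 1)) \<ge> 0" by (rule step_nonneg)
      then show False using j1 a tk by simp
    qed
    have a0: "ps (take (j - 1) w) = 0" using j1 a tk wj by simp
    define w0 where "w0 = take (j - 1) w"
    define r where "r = drop j w"
    have wsplit: "w = w0 @ W # r" unfolding w0_def r_def using tk wj jle
      by (metis append.assoc append_Cons append_take_drop_id self_append_conv2)
    have h1: "ps (take i w0) \<ge> - int 0" for i
    proof -
      have "take i w0 = take (min i (j - 1)) w" unfolding w0_def by (simp add: min.commute)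
      moreover have "min i (j - 1) < j" using jpos by auto
      ultimately show ?thesis using j2 by simp
    qed
    have h2: "ps w0 = - int 0" using a0 w0_def by simp
    have h3: "\<forall>x\<in>set w0. x \<noteq> S 0" using less.prems(1) wsplit by (metis Un_iff set_append)
    have h4: "length w0 < length w" using wsplit by simp
    have "\<exists>c cs. wfo c \<and> wfs cs \<and> length cs = 0 \<and> w0 = wo c @ wss cs"
      by (rule less.hyps[OF h4 h3]) (use h1 h2 in auto)
    then obtain c0 cs0 where c0: "wfo c0" "wfs cs0" "length cs0 = 0" "w0 = wo c0 @ wss cs0"
      by blast
    have g1: "ps (take i r) \<ge> - int (n - 1)" for i
    proof -
      have "ps (take (length w0 + 1 + i) w) \<ge> - int n" using less.prems(2) by blast
      then show ?thesis using wsplit h2 False by simp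
    qed
    have g2: "ps r = - int (n - 1)" using wsplit less.prems(3) h2 False by simp
    have g3: "\<forall>x\<in>set r. x \<noteq> S 0" using less.prems(1) wsplit by (metis Un_iff set_append list.set_intros(2))
    have g4: "length r < length w" using wsplit by simp
    have "\<exists>c cs. wfo c \<and> wfs cs \<and> length cs = n - 1 \<and> r = wo c @ wss cs"
      by (rule less.hyps[OF g4 g3]) (use g1 g2 in auto)
    then obtain c1 cs1 where c1: "wfo c1" "wfs cs1" "length cs1 = n - 1" "r = wo c1 @ wss cs1"
      by blast
    show ?thesis using c0 c1 wsplit False
      by (intro exI[of _ c0] exI[of _ "c1 # cs1"]) auto
  qed
qed

lemma ps_count: "ps w = int (sum_list (ups w)) - int (length (filter (\<lambda>x. x = W) w))"
proof (induction w)
  case (Cons x w) then show ?case by (cases x) auto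
qed simp

lemma dyck_parse:
  assumes "w \<in> dyck_paths u" "u \<noteq> []" "\<forall>x\<in>set u. x > 0"
  shows "\<exists>t. wf t \<and> word t = w"
proof -
  have uw: "ups w = u" and cw: "length (filter (\<lambda>x. x = W) w) = sum_list u"
    and r: "\<forall>i<length w. ps (take i w) \<ge> 0"
    using assms(1) by (auto simp: dyck_paths_def start_rank_ps)
  have p0: "ps w = 0" using ps_count[of w] uw cw by simp
  have "ps (take i w) \<ge> - int 0" for i
    using r p0 by (cases "i < length w") auto
  moreover have "\<forall>x\<in>set w. x \<noteq> S 0"
  proof
    fix x assume "x \<in> set w"
    then obtain as bs where "w = as @ x # bs" by (meson split_list)
    then show "x \<noteq> S 0" using uw assms(3) by auto
  qed
  ultimately obtain c cs where c: "wfo c" "wfs cs" "length cs = 0" "w = wo c @ wss cs"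
    using parse_gen[of w 0] p0 by auto
  then have "w = wo c" by simp
  moreover have "w \<noteq> []" using uw assms(2) by auto
  ultimately show ?thesis using c by (cases c) auto
qed

lemma word_hd: "\<exists>u rest. word t = S u # rest"
  by (cases t rule: word.cases) auto

lemma prefix_W:
  assumes "wf t" "wf t'" "word t @ W # xs = word t' @ W # ys"
  shows "word t = word t' \<and> xs = ys"
proof -
  have nlt: False if "wf a" "wf b" "word a @ W # xs' = word b @ W # ys'"
    "length (word a) < length (word b)" for a b xs' ys'
  proof -
    have "take (length (word a) + 1) (word a @ W # xs') = take (length (word a) + 1) (word b @ W # ys')"
      using that(3) by simp
    then have "take (length (word a) + 1) (word b) = word a @ [W]" using that(4) by simp
    then have "ps (take (length (word a) + 1) (word b)) = -1" using word_ps(1)[OF that(1)] by simp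
    then show False using word_ps(1)[OF that(2)] by (metis neg_0_le_iff_le zero_neq_neg_one antisym_conv1 not_one_le_zero neg_le_0_iff_le) 
  qed
  have "length (word t) = length (word t')"
    using nlt[OF assms(1,2,3)] nlt[OF assms(2,1) assms(3)[symmetric]] by (meson linorder_neqE_nat)
  then show ?thesis using assms(3) by (simp add: append_eq_append_conv)
qed

lemma slot_split:
  assumes "wfo c" "wfo c'" "wo c @ W # R = wo c' @ W # R'"
  shows "wo c = wo c' \<and> R = R'"
proof (cases c)
  case None
  then show ?thesis
  proof (cases c')
    case (Some t') then show ?thesis using assms None word_hd[of t'] by auto
  qed (use assms in auto)
next
  case (Some t)
  then show ?thesis
  proof (cases c')
    case None then show ?thesis using assms Some word_hd[of t] by auto
  next
    case (Some t') then show ?thesis using assms \<open>c = Some t\<close> prefix_W[of t t' R R'] by auto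
  qed
qed

lemma wss_Cons_ex: "cs \<noteq> [] \<Longrightarrow> \<exists>R. wss cs = W # R"
  by (cases cs) auto

lemma word_inj:
  "wf t \<Longrightarrow> wf t' \<Longrightarrow> word t = word t' \<Longrightarrow> t = t'"
  "wfo c \<Longrightarrow> wfo c' \<Longrightarrow> wo c = wo c' \<Longrightarrow> c = c'"
  "wfs cs \<Longrightarrow> wfs cs' \<Longrightarrow> length cs = length cs' \<Longrightarrow> wss cs = wss cs' \<Longrightarrow> cs = cs'"
proof (induction t and c and cs arbitrary: t' and c' and cs' rule: word_wo_wss.induct)
  case (1 u)
  then show ?case by simp
next
  case (2 u c cs)
  obtain u' ds where t': "t' = Node u' ds" by (cases t')
  have wft: "wf (Node u (c # cs))" "wf t'" "word (Node u (c # cs)) = word t'" by fact+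
  obtain c' cs' where ds: "ds = c' # cs'" using wft t' by (cases ds) auto
  have uu: "u = u'" using wft t' ds by simp
  have l: "length cs = length cs'" "cs \<noteq> []" using wft t' ds uu by auto
  have eq: "wo c @ wss cs = wo c' @ wss cs'" using wft t' ds by simp
  obtain R where R: "wss cs = W # R" using wss_Cons_ex l by blast
  obtain R' where R': "wss cs' = W # R'" using wss_Cons_ex l by (metis length_0_conv)
  have wfs: "wfo c" "wfs cs" "wfo c'" "wfs cs'" using wft t' ds by auto
  have "wo c = wo c' \<and> R = R'" using slot_split[of c c' R R'] eq R R' wfs by simp
  then have "c = c'" "cs = cs'" using "2.IH"(1)[OF wfs(1,3)] "2.IH"(2)[OF wfs(2,4) l(1)] R R' by auto
  then show ?case using t' ds uu by simp
next
  case (3 c')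
  then show ?case
  proof (cases c')
    case (Some t') then show ?thesis using word_hd[of t'] 3 by auto
  qed auto
next
  case (4 t)
  have h: "wf t" "wfo c'" "word t = wo c'" using "4.prems" by auto
  show ?case
  proof (cases c')
    case None then show ?thesis using word_hd[of t] h by auto
  next
    case (Some t') then show ?thesis using "4.IH"[of t'] h by auto
  qed
next
  case 5
  then show ?case by simp
next
  case (6 c cs)
  have h: "wfo c" "wfs cs" "wfs cs'" "length (c # cs) = length cs'" "wss (c # cs) = wss cs'"
    using "6.prems" by auto
  obtain c' cs'' where cs': "cs' = c' # cs''" using h by (cases cs') auto
  have h2: "wfo c'" "wfs cs''" "length cs = length cs''" "wo c @ wss cs = wo c' @ wss cs''"
    using h cs' by auto
  show ?case
  proof (cases "cs = []")
    case True
    then have "cs'' = []" using h2 by simp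
    then show ?thesis using "6.IH"(1)[OF h(1) h2(1)] h2 True cs' by simp
  next
    case False
    obtain R where R: "wss cs = W # R" using wss_Cons_ex False by blast
    obtain R' where R': "wss cs'' = W # R'" using wss_Cons_ex False h2(3) by (metis length_0_conv)
    have "wo c = wo c' \<and> R = R'" using slot_split[of c c' R R'] R R' h2 h by simp
    then have "c = c'" "cs = cs''" using "6.IH"(1)[OF h(1) h2(1)] "6.IH"(2)[OF h(2) h2(2) h2(3)] R R' by auto
    then show ?thesis using cs' by simp
  qed
qed

fun ar :: "int \<Rightarrow> letter list \<Rightarrow> int" where
  "ar b [] = 0"
| "ar b (W # xs) = ar (b - 1) xs"
| "ar b (S n # xs) = b + ar (b + int n) xs"

lemma area_ar_gen: "(\<Sum>i<length w. if w ! i = W then 0 else b + start_rank w i) = ar b w"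
proof (induction w arbitrary: b)
  case Nil then show ?case by simp
next
  case (Cons x w)
  have sr: "start_rank (x # w) (Suc i) = letter_step x + start_rank w i" for i
    by (simp add: start_rank_def)
  have sr0: "start_rank (x # w) 0 = 0" by (simp add: start_rank_def)
  have "(\<Sum>i<length (x # w). if (x # w) ! i = W then 0 else b + start_rank (x # w) i)
      = (if x = W then 0 else b) + (\<Sum>i<length w. if w ! i = W then 0 else (b + letter_step x) + start_rank w i)"
    unfolding length_Cons sum.lessThan_Suc_shift sr sr0 nth_Cons_Suc nth_Cons_0 by (auto intro!: sum.cong simp: algebra_simps)
  also have "\<dots> = ar b (x # w)" using Cons by (cases x) auto
  finally show ?case .
qed

lemma area_ar: "area w = ar 0 w"
  using area_ar_gen[of w 0] unfolding area_def by (smt (verit) sum.cong)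

lemma ar_append: "ar b (xs @ ys) = ar b xs + ar (b + ps xs) ys"
proof (induction xs arbitrary: b)
  case (Cons x xs) then show ?case by (cases x) (auto simp: algebra_simps)
qed simp

lemma ar_shift: "ar b xs = ar 0 xs + b * int (length (ups xs))"
proof (induction xs arbitrary: b)
  case (Cons x xs)
  show ?case
  proof (cases x)
    case (S n)
    then show ?thesis using Cons[of "b + int n"] Cons[of "int n"] by (simp add: algebra_simps)
  next
    case W
    then show ?thesis using Cons[of "b - 1"] Cons[of "-1"] by (simp add: algebra_simps)
  qed
qed simp

definition nc :: "tree \<Rightarrow> nat" where "nc t = length (pre t)"

fun Ar :: "tree \<Rightarrow> nat" and Ao :: "nat \<Rightarrow> tree option \<Rightarrow> nat" and As :: "nat \<Rightarrow> tree option list \<Rightarrow> nat" where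
  "Ar (Node u cs) = As u cs"
| "Ao h None = 0"
| "Ao h (Some t) = h * nc t + Ar t"
| "As h [] = 0"
| "As h (c # cs) = Ao h c + As (h - 1) cs"

fun Dt :: "tree \<Rightarrow> nat" and Do :: "nat \<Rightarrow> tree option \<Rightarrow> nat" and Ds :: "nat \<Rightarrow> tree option list \<Rightarrow> nat" where
  "Dt (Node u cs) = Ds 0 cs"
| "Do k None = 0"
| "Do k (Some t) = k * nc t + Dt t"
| "Ds k [] = 0"
| "Ds k (c # cs) = Do k c + Ds (Suc k) cs"

lemma area_word:
  "wf t \<Longrightarrow> ar 0 (word t) = int (Ar t)"
  "wfo c \<Longrightarrow> ar (int h) (wo c) = int (Ao h c)"
  "wfs cs \<Longrightarrow> length cs \<le> h \<Longrightarrow> ar (int h) (wss cs) = int (As (h - 1) cs)"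
proof (induction t and c and cs arbitrary: and h and h rule: word_wo_wss.induct)
  case (1 u)
  then show ?case by simp
next
  case (2 u c cs)
  have p: "wfo c" "wfs cs" "length cs \<le> u" using "2.prems" by auto
  have "ar 0 (word (Node u (c # cs))) = ar (int u) (wo c) + ar (int u) (wss cs)"
    using word_ps(2)[OF p(1)] by (simp add: ar_append)
  also have "\<dots> = int (Ao u c) + int (As (u - 1) cs)"
    using "2.IH"(1)[OF p(1)] "2.IH"(2)[OF p(2,3)] by simp
  finally show ?case by simp
next
  case (4 t)
  have p: "wf t" using "4.prems" by simp
  have "ar (int h) (wo (Some t)) = ar 0 (word t) + int h * int (nc t)"
    using ar_shift[of "int h" "word t"] by (simp add: word_ups nc_def)
  then show ?case using "4.IH"[OF p] by simp
next
  case (6 c cs)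
  have p: "wfo c" "wfs cs" "length cs \<le> h - 1" "h \<ge> 1" using "6.prems" by auto
  have "ar (int h) (wss (c # cs)) = ar (int (h - 1)) (wo c) + ar (int (h - 1)) (wss cs)"
    using word_ps(2)[OF p(1)] p(4) by (simp add: ar_append of_nat_diff)
  also have "\<dots> = int (Ao (h - 1) c) + int (As (h - 1 - 1) cs)"
    using "6.IH"(1)[OF p(1)] "6.IH"(2)[OF p(2,3)] by simp
  finally show ?case by simp
qed auto

lemma area_word': "wf t \<Longrightarrow> area (word t) = int (Ar t)"
  using area_word(1) area_ar by simp

lemma wfs_iff: "wfs cs = (\<forall>c\<in>set cs. \<forall>t\<in>set_option c. wf t)"
proof (induction cs)
  case (Cons c cs) then show ?case by (cases c) auto
qed simp

lemma pres_concat: "pres cs = concat (map preo cs)"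
  by (induction cs) auto

lemma preo_map: "preo (map_option f c) = (case c of None \<Rightarrow> [] | Some t \<Rightarrow> pre (f t))"
  by (cases c) auto

lemma As_sum: "As h cs = (\<Sum>i<length cs. Ao (h - i) (cs ! i))"
proof (induction cs arbitrary: h)
  case (Cons c cs) then show ?case by (simp add: sum.lessThan_Suc_shift del: sum.lessThan_Suc)
qed simp

lemma Ds_sum: "Ds k cs = (\<Sum>i<length cs. Do (k + i) (cs ! i))"
proof (induction cs arbitrary: k)
  case (Cons c cs) then show ?case by (simp add: sum.lessThan_Suc_shift del: sum.lessThan_Suc)
qed simp

lemma mset_concat_rev:
  "(\<And>x. x \<in> set xs \<Longrightarrow> mset (f x) = mset (g x)) \<Longrightarrow> mset (concat (rev (map f xs))) = mset (concat (map g xs))"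
  by (induction xs) auto

lemma refl_props:
  "wf (refl t) = wf t \<and> mset (pre (refl t)) = mset (pre t) \<and> hd (pre (refl t)) = hd (pre t)
   \<and> refl (refl t) = t \<and> nc (refl t) = nc t \<and> (wf t \<longrightarrow> Ar (refl t) = Dt t \<and> Dt (refl t) = Ar t)"
proof (induction t)
  case (Node u cs)
  let ?cs = "map (map_option refl) cs"
  have IH: "\<And>c t. c \<in> set cs \<Longrightarrow> t \<in> set_option c \<Longrightarrow>
     wf (refl t) = wf t \<and> mset (pre (refl t)) = mset (pre t) \<and> refl (refl t) = t \<and> nc (refl t) = nc t
     \<and> (wf t \<longrightarrow> Ar (refl t) = Dt t \<and> Dt (refl t) = Ar t)"
    using Node by blast
  have wfeq: "wf (refl (Node u cs)) = wf (Node u cs)"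
    using IH by (auto simp: wfs_iff)
  have ms: "mset (pre (refl (Node u cs))) = mset (pre (Node u cs))"
  proof -
    have "mset (concat (map preo (rev ?cs))) = mset (concat (map preo cs))"
      unfolding rev_map[symmetric] map_map
      by (rule mset_concat_rev) (auto simp: preo_map split: option.splits dest: IH)
    then show ?thesis by (simp add: pres_concat)
  qed
  have rr: "refl (refl (Node u cs)) = Node u cs"
  proof -
    have "map (map_option refl) (map (map_option refl) cs) = cs"
      unfolding map_map
    proof (rule map_idI)
      fix c assume c: "c \<in> set cs"
      show "(map_option refl \<circ> map_option refl) c = c" by (cases c) (use c IH in auto)
    qed
    then show ?thesis by (simp add: rev_map)
  qed
  have ncq: "nc (refl (Node u cs)) = nc (Node u cs)"
    using ms unfolding nc_def by (metis size_mset)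
  have AD: "Ar (refl (Node u cs)) = Dt (Node u cs) \<and> Dt (refl (Node u cs)) = Ar (Node u cs)"
    if w: "wf (Node u cs)"
  proof -
    have L: "length cs = Suc u" using w by simp
    have wc: "\<And>c t. c \<in> set cs \<Longrightarrow> t \<in> set_option c \<Longrightarrow> wf t" using w by (auto simp: wfs_iff)
    have rv: "rev ?cs ! i = map_option refl (cs ! (u - i))" if "i < Suc u" for i
      using that L by (simp add: rev_nth)
    have AoDo: "Ao j (map_option refl c) = Do j c" "Do j (map_option refl c) = Ao j c"
      if c: "c \<in> set cs" for j c
    proof -
      show "Ao j (map_option refl c) = Do j c"
      proof (cases c)
        case (Some t)
        have "wf t" "Ar (refl t) = Dt t" "nc (refl t) = nc t" using IH[OF c] wc[OF c] Some by auto
        then show ?thesis using Some by simp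
      qed simp
      show "Do j (map_option refl c) = Ao j c"
      proof (cases c)
        case (Some t)
        have "wf t" "Dt (refl t) = Ar t" "nc (refl t) = nc t" using IH[OF c] wc[OF c] Some by auto
        then show ?thesis using Some by simp
      qed simp
    qed
    have "Ar (refl (Node u cs)) = (\<Sum>i<Suc u. Ao (u - i) (map_option refl (cs ! (u - i))))"
      by (simp add: As_sum L rv del: sum.lessThan_Suc)
    also have "\<dots> = (\<Sum>i<Suc u. Ao i (map_option refl (cs ! i)))"
      using sum.nat_diff_reindex[of "\<lambda>i. Ao i (map_option refl (cs ! i))" "Suc u"] by simp
    also have "\<dots> = (\<Sum>i<Suc u. Do i (cs ! i))"
      using L AoDo by (intro sum.cong refl) auto
    also have "\<dots> = Dt (Node u cs)" by (simp add: Ds_sum L del: sum.lessThan_Suc)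
    finally have 1: "Ar (refl (Node u cs)) = Dt (Node u cs)" .
    have "Dt (refl (Node u cs)) = (\<Sum>i<Suc u. Do i (map_option refl (cs ! (u - i))))"
      by (simp add: Ds_sum L rv del: sum.lessThan_Suc)
    also have "\<dots> = (\<Sum>i<Suc u. Do (u - i) (map_option refl (cs ! i)))"
      using sum.nat_diff_reindex[of "\<lambda>i. Do (u - i) (map_option refl (cs ! i))" "Suc u"] by simp
    also have "\<dots> = (\<Sum>i<Suc u. Ao (u - i) (cs ! i))"
      using L AoDo by (intro sum.cong refl) auto
    also have "\<dots> = Ar (Node u cs)" by (simp add: As_sum L del: sum.lessThan_Suc)
    finally have 2: "Dt (refl (Node u cs)) = Ar (Node u cs)" .
    show ?thesis using 1 2 by simp
  qed
  show ?case using wfeq ms rr ncq AD by simp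
qed

definition stp :: "nat list \<Rightarrow> letter \<Rightarrow> nat \<Rightarrow> nat list list \<Rightarrow> nat list list" where
  "stp us x i cols = (if x = W then place_W us cols i else place_S cols i)"

fun run :: "nat list \<Rightarrow> nat list list \<Rightarrow> nat \<Rightarrow> letter list \<Rightarrow> nat list list" where
  "run us cols p [] = cols"
| "run us cols p (x # xs) = run us (stp us x (Suc p) cols) (Suc p) xs"

lemma run_append: "run us cols p (xs @ ys) = run us (run us cols p xs) (p + length xs) ys"
  by (induction xs arbitrary: cols p) auto

lemma fold_run:
  "p \<le> length w \<Longrightarrow> fold (\<lambda>i cols. if w ! (i - 1) = W then place_W us cols i else place_S cols i)
     [Suc p..<Suc (length w)] cols = run us cols p (drop p w)"
proof (induction "length w - p" arbitrary: p cols)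
  case 0
  then show ?case by simp
next
  case (Suc n)
  then have pl: "p < length w" by simp
  have "[Suc p..<Suc (length w)] = Suc p # [Suc (Suc p)..<Suc (length w)]"
    using pl by (simp add: upt_conv_Cons)
  moreover have "drop p w = w ! p # drop (Suc p) w" using pl by (simp add: Cons_nth_drop_Suc)
  ultimately show ?case using Suc.hyps(1)[of "Suc p"] Suc.hyps(2) pl by (simp add: stp_def)
qed

lemma place_S_eq:
  assumes "\<forall>j<c. cols ! j \<noteq> []" "c < length cols" "cols ! c = []"
  shows "place_S cols i = cols[c := [i]]"
proof -
  have "(LEAST j. j < length cols \<and> cols ! j = []) = c"
    by (rule Least_equality) (use assms in \<open>auto simp: not_less[symmetric]\<close>)
  then show ?thesis by (simp add: place_S_def)
qed

lemma filling_run: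
  assumes "w = S u # rest"
  shows "filling w = run (ups w) (replicate (length (ups w)) []) 0 w"
proof -
  let ?m = "length (ups w)"
  have m: "?m > 0" using assms by simp
  have init: "(replicate ?m [])[0 := [1]] = place_S (replicate ?m []) 1"
    using place_S_eq[of 0 "replicate ?m []" 1] m by simp
  have "filling w = fold (\<lambda>i cols. if w ! (i - 1) = W then place_W (ups w) cols i else place_S cols i)
     [Suc 1..<Suc (length w)] ((replicate ?m [])[0 := [1]])"
    by (simp add: filling_def Let_def numeral_2_eq_2 del: upt_Suc)
  also have "\<dots> = run (ups w) ((replicate ?m [])[0 := [1]]) 1 (drop 1 w)"
    using assms by (intro fold_run) simp
  also have "\<dots> = run (ups w) (replicate ?m []) 0 w"
    using assms init by (simp add: stp_def)
  finally show ?thesis .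
qed

fun offs :: "nat \<Rightarrow> tree option list \<Rightarrow> nat list" where
  "offs q [] = []"
| "offs q (c # cs) = q # offs (q + length (wo c) + 1) cs"

fun tab :: "tree \<Rightarrow> nat \<Rightarrow> nat list list" and tabo :: "tree option \<Rightarrow> nat \<Rightarrow> nat list list"
  and tabs :: "tree option list \<Rightarrow> nat \<Rightarrow> nat list list" where
  "tab (Node u cs) p = offs (Suc p) cs # tabs cs (Suc p)"
| "tabo None q = []"
| "tabo (Some t) q = tab t q"
| "tabs [] q = []"
| "tabs (c # cs) q = tabo c q @ tabs cs (q + length (wo c) + 1)"

lemma length_offs[simp]: "length (offs q cs) = length cs"
  by (induction cs arbitrary: q) auto

lemma tab_length:
  "length (tab t p) = length (pre t)"
  "length (tabo c q) = length (preo c)"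
  "length (tabs cs q) = length (pres cs)"
  by (induction t p and c q and cs q rule: tab_tabo_tabs.induct) auto

lemma tab_full:
  "wf t \<Longrightarrow> i < length (pre t) \<Longrightarrow> length (tab t p ! i) = Suc (pre t ! i)"
  "wfo c \<Longrightarrow> i < length (preo c) \<Longrightarrow> length (tabo c q ! i) = Suc (preo c ! i)"
  "wfs cs \<Longrightarrow> i < length (pres cs) \<Longrightarrow> length (tabs cs q ! i) = Suc (pres cs ! i)"
proof (induction t p and c q and cs q arbitrary: i and i and i rule: tab_tabo_tabs.induct)
  case (1 u cs p)
  then show ?case by (cases i) auto
next
  case (5 c cs q)
  then show ?case by (cases "i < length (preo c)") (auto simp: nth_append tab_length)
qed auto

lemma wo_length_Some: "length (wo (Some t)) = length (word t)" by simp

definition slot_ok :: "tree option list \<Rightarrow> nat \<Rightarrow> bool" where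
  "slot_ok cs q \<longleftrightarrow> distinct (offs q cs @ concat (tabs cs q))
     \<and> set (offs q cs @ concat (tabs cs q)) \<subseteq> {q..<q + length (wss cs)}"

lemma slot_ok_Cons:
  assumes "distinct (concat (tabo c q))" "set (concat (tabo c q)) \<subseteq> {Suc q..q + length (wo c)}"
    "slot_ok cs (q + length (wo c) + 1)"
  shows "slot_ok (c # cs) q"
proof -
  let ?q = "q + length (wo c) + 1"
  have A: "distinct (offs ?q cs @ concat (tabs cs ?q))" "set (offs ?q cs @ concat (tabs cs ?q)) \<subseteq> {?q..<?q + length (wss cs)}"
    using assms(3) by (auto simp: slot_ok_def)
  have d1: "distinct (offs ?q cs)" "distinct (concat (tabs cs ?q))" "set (offs ?q cs) \<inter> set (concat (tabs cs ?q)) = {}"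
    using A(1) by auto
  have s1: "set (offs ?q cs) \<subseteq> {?q..<?q + length (wss cs)}" "set (concat (tabs cs ?q)) \<subseteq> {?q..<?q + length (wss cs)}"
    using A(2) by auto
  have "q \<notin> set (offs ?q cs)" "q \<notin> set (concat (tabo c q))" "q \<notin> set (concat (tabs cs ?q))"
    using s1 assms(2) by auto
  moreover have "set (offs ?q cs) \<inter> set (concat (tabo c q)) = {}"
    "set (concat (tabo c q)) \<inter> set (concat (tabs cs ?q)) = {}"
    using s1 assms(2) by fastforce+
  ultimately have "distinct (offs q (c # cs) @ concat (tabs (c # cs) q))"
    using d1 assms(1) by auto
  moreover have "set (offs q (c # cs) @ concat (tabs (c # cs) q)) \<subseteq> {q..<q + length (wss (c # cs))}"
    using s1 assms(2) by auto
  ultimately show ?thesis by (simp add: slot_ok_def)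
qed

lemma tab_ok:
  "wf t \<Longrightarrow> distinct (concat (tab t p)) \<and> set (concat (tab t p)) \<subseteq> {Suc p..p + length (word t)}"
  "wfo c \<Longrightarrow> distinct (concat (tabo c q)) \<and> set (concat (tabo c q)) \<subseteq> {Suc q..q + length (wo c)}"
  "wfs cs \<Longrightarrow> slot_ok cs q"
proof (induction t p and c q and cs q rule: tab_tabo_tabs.induct)
  case (1 u cs p)
  then obtain c cs' where cs: "cs = c # cs'" by (cases cs) auto
  have "slot_ok cs (Suc p)" using 1 by auto
  then show ?case using cs by (auto simp: slot_ok_def)
next
  case (5 c cs q)
  show ?case
    by (rule slot_ok_Cons) (use "5.IH" "5.prems" in auto)
qed (auto simp: slot_ok_def)

definition put :: "'a list \<Rightarrow> nat \<Rightarrow> 'a list \<Rightarrow> 'a list" where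
  "put xs c ys = take c xs @ ys @ drop (c + length ys) xs"

lemma put_length[simp]: "c + length ys \<le> length xs \<Longrightarrow> length (put xs c ys) = length xs"
  by (simp add: put_def)

lemma put_nth: "c + length ys \<le> length xs \<Longrightarrow> j < length xs \<Longrightarrow>
  put xs c ys ! j = (if c \<le> j \<and> j < c + length ys then ys ! (j - c) else xs ! j)"
  by (auto simp: put_def nth_append min_def)

lemma put_Nil[simp]: "c \<le> length xs \<Longrightarrow> put xs c [] = xs"
  by (simp add: put_def)

lemma put_comp1:
  assumes "Suc k + length B + length C \<le> length xs"
  shows "(put (put (xs[k := a]) (Suc k) B) (Suc k + length B) C)[k := a'] = put xs k (a' # B @ C)"
proof (rule nth_equalityI)
  show "length ((put (put (xs[k := a]) (Suc k) B) (Suc k + length B) C)[k := a']) = length (put xs k (a' # B @ C))"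
    using assms by simp
next
  fix j assume "j < length ((put (put (xs[k := a]) (Suc k) B) (Suc k + length B) C)[k := a'])"
  then have j: "j < length xs" using assms by simp
  consider "j < k" | "j = k" | "Suc k \<le> j \<and> j < Suc k + length B" | "Suc k + length B \<le> j \<and> j < Suc k + length B + length C"
    | "Suc k + length B + length C \<le> j" by linarith
  then show "(put (put (xs[k := a]) (Suc k) B) (Suc k + length B) C)[k := a'] ! j = put xs k (a' # B @ C) ! j"
  proof cases
    case 1 then show ?thesis using assms j by (simp add: put_nth nth_list_update)
  next
    case 2 then show ?thesis using assms j by (simp add: put_nth nth_list_update)
  next
    case 3
    then have "j - Suc k < length B" "j - k = Suc (j - Suc k)" by linarith+
    then have "(a' # B @ C) ! (j - k) = B ! (j - Suc k)" by (simp add: nth_append)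
    then show ?thesis using assms j 3 by (simp add: put_nth nth_list_update)
  next
    case 4
    then have "j - k = Suc (j - Suc k)" "\<not> j - Suc k < length B" "j - Suc k - length B = j - (Suc k + length B)" by linarith+
    then have "(a' # B @ C) ! (j - k) = C ! (j - (Suc k + length B))"
      by (simp only: nth_Cons_Suc nth_append if_False)
    then show ?thesis using assms j 4 by (simp add: put_nth nth_list_update)
  next
    case 5 then show ?thesis using assms j by (simp add: put_nth nth_list_update)
  qed
qed

lemma put_comp2:
  assumes "k + length B + length C \<le> length xs" "k0 < k"
  shows "(put (put (xs[k0 := a]) k B) (k + length B) C)[k0 := a'] = (put xs k (B @ C))[k0 := a']"
proof (rule nth_equalityI)
  show "length ((put (put (xs[k0 := a]) k B) (k + length B) C)[k0 := a']) = length ((put xs k (B @ C))[k0 := a'])"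
    using assms by simp
next
  fix j assume "j < length ((put (put (xs[k0 := a]) k B) (k + length B) C)[k0 := a'])"
  then have j: "j < length xs" using assms by simp
  consider "j < k" | "k \<le> j \<and> j < k + length B" | "k + length B \<le> j \<and> j < k + length B + length C"
    | "k + length B + length C \<le> j" by linarith
  then show "(put (put (xs[k0 := a]) k B) (k + length B) C)[k0 := a'] ! j = (put xs k (B @ C))[k0 := a'] ! j"
  proof cases
    case 1 then show ?thesis using assms j by (simp add: put_nth nth_list_update)
  next
    case 2
    then have "j - k < length B" by linarith
    then have "(B @ C) ! (j - k) = B ! (j - k)" by (simp add: nth_append)
    then show ?thesis using assms j 2 by (simp add: put_nth nth_list_update)
  next
    case 3
    then have "\<not> j - k < length B" "j - k - length B = j - (k + length B)" by linarith+
    then have "(B @ C) ! (j - k) = C ! (j - (k + length B))" by (simp only: nth_append if_False)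
    then show ?thesis using assms j 3 by (simp add: put_nth nth_list_update)
  next
    case 4 then show ?thesis using assms j by (simp add: put_nth nth_list_update)
  qed
qed

definition lay :: "nat list \<Rightarrow> nat list list \<Rightarrow> nat \<Rightarrow> nat \<Rightarrow> bool" where
  "lay us cols k p \<longleftrightarrow> length cols = length us \<and> k \<le> length cols \<and> (\<forall>j<k. cols ! j \<noteq> [])
     \<and> (\<forall>j. k \<le> j \<and> j < length cols \<longrightarrow> cols ! j = []) \<and> (\<forall>j<length cols. \<forall>e\<in>set (cols ! j). e \<le> p)"

lemma place_W_eq:
  assumes "length cols = length us" "k0 < k" "k \<le> length cols" "\<forall>j<k. cols ! j \<noteq> []"
    "\<forall>j<k0. \<forall>e\<in>set (cols ! j). e < last (cols ! k0)"
    "\<forall>j. k0 < j \<and> j < k \<longrightarrow> length (cols ! j) = Suc (us ! j)"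
    "\<forall>j. k \<le> j \<and> j < length cols \<longrightarrow> cols ! j = []"
    "length (cols ! k0) < Suc (us ! k0)"
  shows "place_W us cols i = cols[k0 := cols ! k0 @ [i]]"
proof -
  let ?J = "active_cols us cols"
  have inJ: "j = k0 \<or> j < k0" if j: "j \<in> ?J" for j
  proof (rule ccontr)
    assume "\<not> (j = k0 \<or> j < k0)"
    then have "k0 < j" by simp
    have j2: "j < length cols" "cols ! j \<noteq> []" "length (cols ! j) < Suc (us ! j)"
      using j unfolding active_cols_def by auto
    show False
    proof (cases "j < k")
      case True then show False using assms(6) \<open>k0 < j\<close> j2 by simp
    next
      case False then show False using assms(7) j2 by simp
    qed
  qed
  have k0J: "k0 \<in> ?J" using assms unfolding active_cols_def by auto
  have lt: "last (cols ! j) < last (cols ! k0)" if "j < k0" for j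
  proof -
    have "cols ! j \<noteq> []" using assms(4,2) that by simp
    then have "last (cols ! j) \<in> set (cols ! j)" by simp
    then show ?thesis using assms(5) that by blast
  qed
  have "(SOME j. j \<in> ?J \<and> (\<forall>j'\<in>?J. last (cols ! j') \<le> last (cols ! j))) = k0"
  proof (rule some_equality)
    have "\<forall>j'\<in>?J. last (cols ! j') \<le> last (cols ! k0)"
    proof
      fix j' assume "j' \<in> ?J"
      then have "j' = k0 \<or> j' < k0" by (rule inJ)
      then show "last (cols ! j') \<le> last (cols ! k0)"
      proof
        assume "j' < k0" then show ?thesis using lt[of j'] by simp
      qed simp
    qed
    then show "k0 \<in> ?J \<and> (\<forall>j'\<in>?J. last (cols ! j') \<le> last (cols ! k0))" using k0J by simp
  next
    fix j assume h: "j \<in> ?J \<and> (\<forall>j'\<in>?J. last (cols ! j') \<le> last (cols ! j))"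
    show "j = k0"
    proof (rule ccontr)
      assume "j \<noteq> k0"
      then have "j < k0" using inJ h by blast
      then have "last (cols ! j) < last (cols ! k0)" by (rule lt)
      moreover have "last (cols ! k0) \<le> last (cols ! j)" using h k0J by blast
      ultimately show False by simp
    qed
  qed
  then show ?thesis by (simp add: place_W_def Let_def)
qed

lemma tabo_entry:
  assumes "wfo c" "i < length (preo c)" "e \<in> set (tabo c q ! i)"
  shows "Suc q \<le> e \<and> e \<le> q + length (wo c)"
proof -
  have "tabo c q ! i \<in> set (tabo c q)" using assms(2) by (simp add: tab_length)
  then have "e \<in> set (concat (tabo c q))" using assms(3) by auto
  then show ?thesis using tab_ok(2)[OF assms(1), of q] by auto
qed

lemma tabo_col:
  assumes "wfo c" "i < length (preo c)"
  shows "length (tabo c q ! i) = Suc (preo c ! i)" "tabo c q ! i \<noteq> []"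
proof -
  show 1: "length (tabo c q ! i) = Suc (preo c ! i)" using tab_full(2)[OF assms, of q] .
  show "tabo c q ! i \<noteq> []" using 1 by (metis list.size(3) nat.distinct(1))
qed

lemma run_tree:
  "wf t \<Longrightarrow> lay us cols k p \<Longrightarrow> k + length (pre t) \<le> length cols \<Longrightarrow>
     (\<forall>i<length (pre t). us ! (k + i) = pre t ! i) \<Longrightarrow> run us cols p (word t) = put cols k (tab t p)"
  "wfo c \<Longrightarrow> lay us cols k p \<Longrightarrow> k + length (preo c) \<le> length cols \<Longrightarrow>
     (\<forall>i<length (preo c). us ! (k + i) = preo c ! i) \<Longrightarrow> run us cols p (wo c) = put cols k (tabo c p)"
  "wfs cs \<Longrightarrow> lay us cols k q \<Longrightarrow> k + length (pres cs) \<le> length cols \<Longrightarrow> k0 < k \<Longrightarrow>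
     (\<forall>j<k0. \<forall>e\<in>set (cols ! j). e < last (cols ! k0)) \<Longrightarrow>
     (\<forall>j. k0 < j \<and> j < k \<longrightarrow> length (cols ! j) = Suc (us ! j)) \<Longrightarrow>
     length (cols ! k0) + length cs = Suc (us ! k0) \<Longrightarrow>
     (\<forall>i<length (pres cs). us ! (k + i) = pres cs ! i) \<Longrightarrow>
     run us cols q (wss cs) = (put cols k (tabs cs (Suc q)))[k0 := cols ! k0 @ offs (Suc q) cs]"
proof (induction t and c and cs arbitrary: cols k p and cols k p and cols k k0 q rule: word_wo_wss.induct)
  case (1 u)
  then show ?case by simp
next
  case (2 u c cs)
  let ?lo = "length (preo c)" and ?ls = "length (pres cs)"
  have w: "0 < u" "length cs = u" "wfo c" "wfs cs" using "2.prems"(1) by auto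
  have L: "Suc k + ?lo + ?ls \<le> length cols" using "2.prems"(3) by simp
  have lay: "length cols = length us" "\<forall>j<k. cols ! j \<noteq> []" "\<forall>j. k \<le> j \<and> j < length cols \<longrightarrow> cols ! j = []"
    "\<forall>j<length cols. \<forall>e\<in>set (cols ! j). e \<le> p"
    using "2.prems"(2) by (auto simp: lay_def)
  have ent: "\<And>j e. j < length cols \<Longrightarrow> e \<in> set (cols ! j) \<Longrightarrow> e \<le> p" using lay(4) by blast
  have usm: "\<forall>i<length (pre (Node u (c # cs))). us ! (k + i) = pre (Node u (c # cs)) ! i" by fact
  have usk: "us ! k = u" using usm[rule_format, of 0] by simp
  have usc: "us ! (Suc k + i) = preo c ! i" if "i < ?lo" for i
    using usm[rule_format, of "Suc i"] that by (simp add: nth_append)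
  have uss: "us ! (Suc k + ?lo + i) = pres cs ! i" if "i < ?ls" for i
    using usm[rule_format, of "Suc (?lo + i)"] that by (simp add: nth_append add.assoc)
  define cols1 where "cols1 = cols[k := [Suc p]]"
  have pS: "place_S cols (Suc p) = cols1"
    unfolding cols1_def using lay L by (intro place_S_eq) auto
  have lay1: "lay us cols1 (Suc k) (Suc p)"
    unfolding lay_def cols1_def using lay L by (auto simp: nth_list_update) (meson le_SucI)
  have r1: "run us cols1 (Suc p) (wo c) = put cols1 (Suc k) (tabo c (Suc p))"
    using "2.IH"(1)[OF w(3) lay1] L usc by (simp add: cols1_def)
  define cols2 where "cols2 = put cols1 (Suc k) (tabo c (Suc p))"
  define q where "q = Suc p + length (wo c)"
  have len2: "length cols2 = length cols" unfolding cols2_def cols1_def using L by (simp add: tab_length)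
  have c2: "cols2 ! j = (if Suc k \<le> j \<and> j < Suc k + ?lo then tabo c (Suc p) ! (j - Suc k) else cols1 ! j)"
    if "j < length cols" for j
    unfolding cols2_def using that L by (simp add: put_nth tab_length cols1_def)
  have c2k: "cols2 ! k = [Suc p]" using c2[of k] L by (simp add: cols1_def)
  have lay2: "lay us cols2 (Suc k + ?lo) q"
    unfolding lay_def
  proof (intro conjI allI impI ballI)
    show "length cols2 = length us" using len2 lay by simp
    show "Suc k + ?lo \<le> length cols2" using len2 L by simp
  next
    fix j assume j: "j < Suc k + ?lo"
    show "cols2 ! j \<noteq> []"
    proof (cases "Suc k \<le> j")
      case True then show ?thesis using c2[of j] j L tabo_col(2)[OF w(3), of "j - Suc k"] by auto
    next
      case False then show ?thesis using c2[of j] j L lay by (auto simp: cols1_def nth_list_update)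
    qed
  next
    fix j assume j: "Suc k + ?lo \<le> j \<and> j < length cols2"
    then show "cols2 ! j = []" using c2[of j] len2 lay by (auto simp: cols1_def nth_list_update)
  next
    fix j e assume j: "j < length cols2" and e: "e \<in> set (cols2 ! j)"
    show "e \<le> q"
    proof (cases "Suc k \<le> j \<and> j < Suc k + ?lo")
      case True
      then show ?thesis using c2[of j] j e len2 tabo_entry[OF w(3), of "j - Suc k" e "Suc p"] q_def by auto
    next
      case False
      then have e1: "e \<in> set (cols1 ! j)" using c2[of j] j e len2 by auto
      show ?thesis
      proof (cases "j = k")
        case False
        then have "e \<in> set (cols ! j)" using e1 by (simp add: cols1_def)
        then have "e \<le> p" using ent j len2 by simp
        then show ?thesis using q_def by simp
      qed (use e1 j len2 q_def in \<open>auto simp: cols1_def\<close>)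
    qed
  qed
  have r2: "run us cols2 q (wss cs) = (put cols2 (Suc k + ?lo) (tabs cs (Suc q)))[k := cols2 ! k @ offs (Suc q) cs]"
  proof (rule "2.IH"(2)[OF w(4) lay2])
    show "Suc k + ?lo + ?ls \<le> length cols2" using L len2 by simp
    show "k < Suc k + ?lo" by simp
    show "\<forall>j<k. \<forall>e\<in>set (cols2 ! j). e < last (cols2 ! k)"
    proof (intro allI impI ballI)
      fix j e assume j: "j < k" and e: "e \<in> set (cols2 ! j)"
      then have "e \<in> set (cols ! j)" using c2[of j] L by (simp add: cols1_def)
      moreover have "j < length cols" using j L by simp
      ultimately have "e \<le> p" using ent by blast
      then show "e < last (cols2 ! k)" using c2k by simp
    qed
    show "\<forall>j. k < j \<and> j < Suc k + ?lo \<longrightarrow> length (cols2 ! j) = Suc (us ! j)"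
    proof (intro allI impI)
      fix j assume j: "k < j \<and> j < Suc k + ?lo"
      then have "length (tabo c (Suc p) ! (j - Suc k)) = Suc (preo c ! (j - Suc k))"
        using tabo_col(1)[OF w(3), of "j - Suc k" "Suc p"] by linarith
      moreover have "us ! j = preo c ! (j - Suc k)"
      proof -
        have "j - Suc k < ?lo" "Suc k + (j - Suc k) = j" using j by linarith+
        then show ?thesis using usc[of "j - Suc k"] by simp
      qed
      ultimately show "length (cols2 ! j) = Suc (us ! j)" using c2[of j] j L by simp
    qed
    show "length (cols2 ! k) + length cs = Suc (us ! k)" using c2k w usk by simp
    show "\<forall>i<?ls. us ! (Suc k + ?lo + i) = pres cs ! i" using uss by simp
  qed
  have "run us cols p (word (Node u (c # cs))) = run us cols2 q (wss cs)"
    using pS r1 by (simp add: stp_def run_append cols2_def q_def)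
  also have "\<dots> = (put (put (cols[k := [Suc p]]) (Suc k) (tabo c (Suc p))) (Suc k + length (tabo c (Suc p))) (tabs cs (Suc q)))[k := [Suc p] @ offs (Suc q) cs]"
    using r2 c2k by (simp add: cols2_def cols1_def tab_length)
  also have "\<dots> = put cols k (([Suc p] @ offs (Suc q) cs) # tabo c (Suc p) @ tabs cs (Suc q))"
    by (rule put_comp1) (use L in \<open>simp add: tab_length\<close>)
  also have "\<dots> = put cols k (tab (Node u (c # cs)) p)"
    by (simp add: q_def)
  finally show ?case .
next
  case 3
  then show ?case by (simp add: lay_def)
next
  case (4 t)
  then show ?case by simp
next
  case 5
  then show ?case by (simp add: lay_def)
next
  case (6 c cs)
  let ?lo = "length (preo c)" and ?ls = "length (pres cs)"
  have w: "wfo c" "wfs cs" using "6.prems"(1) by auto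
  have L: "k + ?lo + ?ls \<le> length cols" using "6.prems"(3) by simp
  have lay: "length cols = length us" "\<forall>j<k. cols ! j \<noteq> []" "\<forall>j. k \<le> j \<and> j < length cols \<longrightarrow> cols ! j = []"
    "k \<le> length cols"
    using "6.prems"(2) by (auto simp: lay_def)
  have ent: "\<And>j e. j < length cols \<Longrightarrow> e \<in> set (cols ! j) \<Longrightarrow> e \<le> q"
    using "6.prems"(2) unfolding lay_def by blast
  have k0k: "k0 < k" by fact
  have p5: "\<forall>j<k0. \<forall>e\<in>set (cols ! j). e < last (cols ! k0)" by fact
  have p6: "\<forall>j. k0 < j \<and> j < k \<longrightarrow> length (cols ! j) = Suc (us ! j)" by fact
  have p7: "length (cols ! k0) + length (c # cs) = Suc (us ! k0)" by fact
  have usm: "\<forall>i<length (pres (c # cs)). us ! (k + i) = pres (c # cs) ! i" by fact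
  have usc: "us ! (k + i) = preo c ! i" if "i < ?lo" for i
    using usm[rule_format, of i] that by (simp add: nth_append)
  have uss: "us ! (k + ?lo + i) = pres cs ! i" if "i < ?ls" for i
    using usm[rule_format, of "?lo + i"] that by (simp add: nth_append add.assoc)
  define cols1 where "cols1 = cols[k0 := cols ! k0 @ [Suc q]]"
  have pW: "place_W us cols (Suc q) = cols1"
    unfolding cols1_def using lay k0k p5 p6 p7 by (intro place_W_eq) auto
  have c1: "cols1 ! j = (if j = k0 then cols ! k0 @ [Suc q] else cols ! j)" if "j < length cols" for j
    unfolding cols1_def using that by (simp add: nth_list_update)
  have lay1: "lay us cols1 k (Suc q)"
    unfolding lay_def
  proof (intro conjI allI impI ballI)
    show "length cols1 = length us" "k \<le> length cols1" using lay by (auto simp: cols1_def)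
  next
    fix j assume "j < k" then show "cols1 ! j \<noteq> []" using c1[of j] lay by auto
  next
    fix j assume "k \<le> j \<and> j < length cols1" then show "cols1 ! j = []" using c1[of j] lay k0k by (auto simp: cols1_def)
  next
    fix j e assume j: "j < length cols1" and e: "e \<in> set (cols1 ! j)"
    have jl: "j < length cols" using j by (simp add: cols1_def)
    show "e \<le> Suc q"
    proof (cases "j = k0")
      case True
      then have "e \<in> set (cols ! k0) \<or> e = Suc q" using e c1[OF jl] by auto
      then show ?thesis using ent[of k0 e] jl True by auto
    next
      case False
      then have "e \<in> set (cols ! j)" using e c1[OF jl] by auto
      then show ?thesis using ent[OF jl] by fastforce
    qed
  qed
  have r1: "run us cols1 (Suc q) (wo c) = put cols1 k (tabo c (Suc q))"
    using "6.IH"(1)[OF w(1) lay1] L usc by (simp add: cols1_def)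
  define cols2 where "cols2 = put cols1 k (tabo c (Suc q))"
  define q' where "q' = Suc q + length (wo c)"
  have len2: "length cols2 = length cols" unfolding cols2_def cols1_def using L by (simp add: tab_length)
  have c2: "cols2 ! j = (if k \<le> j \<and> j < k + ?lo then tabo c (Suc q) ! (j - k) else cols1 ! j)"
    if "j < length cols" for j
    unfolding cols2_def using that L by (simp add: put_nth tab_length cols1_def)
  have c2k0: "cols2 ! k0 = cols ! k0 @ [Suc q]" using c2[of k0] c1[of k0] L k0k by simp
  have lay2: "lay us cols2 (k + ?lo) q'"
    unfolding lay_def
  proof (intro conjI allI impI ballI)
    show "length cols2 = length us" using len2 lay by simp
    show "k + ?lo \<le> length cols2" using len2 L by simp
  next
    fix j assume j: "j < k + ?lo"
    show "cols2 ! j \<noteq> []"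
    proof (cases "k \<le> j")
      case True then show ?thesis using c2[of j] j L tabo_col(2)[OF w(1), of "j - k"] by auto
    next
      case False then show ?thesis using c2[of j] c1[of j] j L lay by auto
    qed
  next
    fix j assume j: "k + ?lo \<le> j \<and> j < length cols2"
    then show "cols2 ! j = []" using c2[of j] c1[of j] len2 lay k0k by auto
  next
    fix j e assume j: "j < length cols2" and e: "e \<in> set (cols2 ! j)"
    have jl: "j < length cols" using j len2 by simp
    show "e \<le> q'"
    proof (cases "k \<le> j \<and> j < k + ?lo")
      case True
      then show ?thesis using c2[of j] jl e tabo_entry[OF w(1), of "j - k" e "Suc q"] q'_def by auto
    next
      case False
      then have e1: "e \<in> set (cols1 ! j)" using c2[OF jl] e by auto
      have "length cols1 = length cols" by (simp add: cols1_def)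
      then have "e \<le> Suc q" using lay1 e1 jl unfolding lay_def by auto
      then show ?thesis using q'_def by simp
    qed
  qed
  have r2: "run us cols2 q' (wss cs) = (put cols2 (k + ?lo) (tabs cs (Suc q')))[k0 := cols2 ! k0 @ offs (Suc q') cs]"
  proof (rule "6.IH"(2)[OF w(2) lay2])
    show "k + ?lo + ?ls \<le> length cols2" using L len2 by simp
    show "k0 < k + ?lo" using k0k by simp
    show "\<forall>j<k0. \<forall>e\<in>set (cols2 ! j). e < last (cols2 ! k0)"
    proof (intro allI impI ballI)
      fix j e assume j: "j < k0" and e: "e \<in> set (cols2 ! j)"
      have jl: "j < length cols" using j k0k L by simp
      then have "e \<in> set (cols ! j)" using e c2[OF jl] c1[OF jl] j k0k by auto
      then have "e \<le> q" using ent[OF jl] by blast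
      then show "e < last (cols2 ! k0)" using c2k0 by simp
    qed
    show "\<forall>j. k0 < j \<and> j < k + ?lo \<longrightarrow> length (cols2 ! j) = Suc (us ! j)"
    proof (intro allI impI)
      fix j assume j: "k0 < j \<and> j < k + ?lo"
      have jl: "j < length cols" using j L by simp
      show "length (cols2 ! j) = Suc (us ! j)"
      proof (cases "k \<le> j")
        case True
        have jj: "j - k < ?lo" "k + (j - k) = j" using j True by linarith+
        have "length (tabo c (Suc q) ! (j - k)) = Suc (preo c ! (j - k))"
          using tabo_col(1)[OF w(1) jj(1)] .
        moreover have "us ! j = preo c ! (j - k)" using usc[OF jj(1)] jj(2) by simp
        ultimately show ?thesis using c2[OF jl] True j by simp
      next
        case False
        then show ?thesis using c2[OF jl] c1[OF jl] p6 j by auto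
      qed
    qed
    show "length (cols2 ! k0) + length cs = Suc (us ! k0)" using c2k0 p7 by simp
    show "\<forall>i<?ls. us ! (k + ?lo + i) = pres cs ! i" using uss by simp
  qed
  have "run us cols q (wss (c # cs)) = run us cols2 q' (wss cs)"
    using pW r1 by (simp add: stp_def run_append cols2_def q'_def)
  also have "\<dots> = (put (put (cols[k0 := cols ! k0 @ [Suc q]]) k (tabo c (Suc q))) (k + length (tabo c (Suc q))) (tabs cs (Suc q')))[k0 := (cols ! k0 @ [Suc q]) @ offs (Suc q') cs]"
    using r2 c2k0 by (simp add: cols2_def cols1_def tab_length)
  also have "\<dots> = (put cols k (tabo c (Suc q) @ tabs cs (Suc q')))[k0 := (cols ! k0 @ [Suc q]) @ offs (Suc q') cs]"
    by (rule put_comp2) (use L k0k in \<open>simp_all add: tab_length\<close>)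
  also have "\<dots> = (put cols k (tabs (c # cs) (Suc q)))[k0 := cols ! k0 @ offs (Suc q) (c # cs)]"
    by (simp add: q'_def)
  finally show ?case .
qed

lemma filling_word: assumes "wf t" shows "filling (word t) = tab t 0"
proof -
  obtain u rest where wr: "word t = S u # rest" using word_hd by blast
  let ?m = "length (pre t)"
  have "filling (word t) = run (pre t) (replicate ?m []) 0 (word t)"
    using filling_run[OF wr] by (simp add: word_ups)
  also have "\<dots> = put (replicate ?m []) 0 (tab t 0)"
    by (rule run_tree(1)[OF assms]) (auto simp: lay_def)
  also have "\<dots> = tab t 0" by (simp add: put_def tab_length)
  finally show ?thesis .
qed

lemma distinct_concat_uniq:
  "distinct (concat F) \<Longrightarrow> j < length F \<Longrightarrow> j' < length F \<Longrightarrow> e \<in> set (F ! j) \<Longrightarrow> e \<in> set (F ! j') \<Longrightarrow> j = j'"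
proof (induction F arbitrary: j j')
  case (Cons x F)
  have d: "distinct (concat F)" "set x \<inter> set (concat F) = {}" using Cons.prems(1) by auto
  have mem: "i < length F \<Longrightarrow> y \<in> set (F ! i) \<Longrightarrow> y \<in> set (concat F)" for i y
    by (metis UN_I nth_mem set_concat)
  show ?case
  proof (cases j)
    case 0
    show ?thesis
    proof (cases j')
      case (Suc i')
      then have "e \<in> set x" "e \<in> set (concat F)" using Cons.prems 0 mem[of i' e] by auto
      then show ?thesis using d by blast
    qed (use 0 in simp)
  next
    case (Suc i)
    show ?thesis
    proof (cases j')
      case 0
      then have "e \<in> set x" "e \<in> set (concat F)" using Cons.prems Suc mem[of i e] by auto
      then show ?thesis using d by blast
    next
      case (Suc i')
      then show ?thesis using Cons.IH[OF d(1), of i i'] Cons.prems \<open>j = Suc i\<close> by simp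
    qed
  qed
qed simp

lemma distinct_concat_nth: "distinct (concat F) \<Longrightarrow> j < length F \<Longrightarrow> distinct (F ! j)"
  by (induction F arbitrary: j) (auto simp: nth_Cons split: nat.splits)

lemma entry_rank_at:
  assumes d: "distinct (concat F)" and j: "j < length F" and r: "r < length (F ! j)"
  shows "entry_rank F (F ! j ! r) =
    (if F ! j ! r = 0 \<or> j = 0 \<or> \<not> hd (F ! j) \<le> F ! j ! r then r else entry_rank F (hd (F ! j) - 1) + r)"
proof -
  let ?e = "F ! j ! r"
  have e: "?e \<in> set (F ! j)" using r by simp
  have s: "(SOME j'. j' < length F \<and> ?e \<in> set (F ! j')) = j"
    by (rule some_equality) (use j e distinct_concat_uniq[OF d] in auto)
  have dj: "distinct (F ! j)" using distinct_concat_nth[OF d j] .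
  have l: "(LEAST r'. r' < length (F ! j) \<and> F ! j ! r' = ?e) = r"
    by (rule Least_equality) (use r dj nth_eq_iff_index_eq in \<open>auto simp: not_less[symmetric]\<close>)
  show ?thesis
    by (subst entry_rank.simps) (simp only: Let_def s l)
qed

definition loc :: "nat list list \<Rightarrow> nat \<Rightarrow> nat list list \<Rightarrow> bool" where
  "loc F k X \<longleftrightarrow> k + length X \<le> length F \<and> (\<forall>i<length X. F ! (k + i) = X ! i)"

lemma loc_append: assumes "loc F k (A @ B)" shows "loc F k A \<and> loc F (k + length A) B"
proof -
  have l: "k + length A + length B \<le> length F" and n: "\<And>i. i < length A + length B \<Longrightarrow> F ! (k + i) = (A @ B) ! i"
    using assms unfolding loc_def by auto
  have "F ! (k + i) = A ! i" if "i < length A" for i using n[of i] that by (simp add: nth_append)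
  moreover have "F ! (k + length A + i) = B ! i" if "i < length B" for i
    using n[of "length A + i"] that by (simp add: nth_append add.assoc)
  ultimately show ?thesis using l unfolding loc_def by auto
qed

lemma loc_Cons: assumes "loc F k (a # B)" shows "F ! k = a \<and> k < length F \<and> loc F (Suc k) B"
proof -
  have l: "k + Suc (length B) \<le> length F" and n: "\<And>i. i < Suc (length B) \<Longrightarrow> F ! (k + i) = (a # B) ! i"
    using assms unfolding loc_def by auto
  have "F ! (Suc k + i) = B ! i" if "i < length B" for i using n[of "Suc i"] that by simp
  moreover have "F ! k = a" using n[of 0] by simp
  ultimately show ?thesis using l unfolding loc_def by auto
qed

lemma offs_ge: "e \<in> set (offs q cs) \<Longrightarrow> q \<le> e"
proof (induction cs arbitrary: q)
  case (Cons c cs)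
  then have "e = q \<or> e \<in> set (offs (Suc (q + length (wo c))) cs)" by simp
  then show ?case using Cons.IH[of "Suc (q + length (wo c))"] by auto
qed simp

lemma offs_Suc: "i < length cs \<Longrightarrow> offs q (c # cs) ! Suc i = offs (q + length (wo c) + 1) cs ! i"
  by simp

lemma rank_tree:
  assumes d: "distinct (concat F)"
  shows
  "wf t \<Longrightarrow> loc F k (tab t p) \<Longrightarrow> (k = 0 \<longrightarrow> \<beta> = 0) \<Longrightarrow> (0 < k \<longrightarrow> \<beta> = entry_rank F p) \<Longrightarrow>
     (\<forall>r<length (F ! k). entry_rank F (F ! k ! r) = \<beta> + r) \<and>
     (\<Sum>j=Suc k..<k + length (pre t). entry_rank F (hd (F ! j) - 1)) = Dt t + \<beta> * (length (pre t) - 1)"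
  "wfo c \<Longrightarrow> loc F k (tabo c q) \<Longrightarrow> 0 < k \<Longrightarrow> entry_rank F q = b + m \<Longrightarrow>
     (\<Sum>j=k..<k + length (preo c). entry_rank F (hd (F ! j) - 1)) = Do m c + b * length (preo c)"
  "wfs cs \<Longrightarrow> loc F k (tabs cs q) \<Longrightarrow> 0 < k \<Longrightarrow> (\<forall>i<length cs. entry_rank F (offs q cs ! i) = b + m + i) \<Longrightarrow>
     (\<Sum>j=k..<k + length (pres cs). entry_rank F (hd (F ! j) - 1)) = Ds m cs + b * length (pres cs)"
proof (induction t p and c q and cs q arbitrary: k \<beta> and k b m and k b m rule: tab_tabo_tabs.induct)
  case (1 u cs p)
  have w: "length cs = Suc u" "wfs cs" using "1.prems"(1) by auto
  have lc: "F ! k = offs (Suc p) cs" "k < length F" "loc F (Suc k) (tabs cs (Suc p))"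
    using loc_Cons[OF "1.prems"(2)[simplified]] by auto
  have P1: "\<forall>r<length (F ! k). entry_rank F (F ! k ! r) = \<beta> + r"
  proof (intro allI impI)
    fix r assume r: "r < length (F ! k)"
    have er: "entry_rank F (F ! k ! r) =
      (if F ! k ! r = 0 \<or> k = 0 \<or> \<not> hd (F ! k) \<le> F ! k ! r then r else entry_rank F (hd (F ! k) - 1) + r)"
      by (rule entry_rank_at[OF d lc(2) r])
    show "entry_rank F (F ! k ! r) = \<beta> + r"
    proof (cases "k = 0")
      case True
      then show ?thesis using er "1.prems"(3) by simp
    next
      case False
      have "F ! k ! r \<in> set (offs (Suc p) cs)" using r lc(1) by (metis nth_mem)
      then have ge: "Suc p \<le> F ! k ! r" by (rule offs_ge)
      obtain c cs' where cs: "cs = c # cs'" using w by (cases cs) auto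
      have hd: "hd (F ! k) = Suc p" using lc(1) cs by simp
      show ?thesis using er False ge hd "1.prems"(4) by simp
    qed
  qed
  have rk: "\<forall>i<length cs. entry_rank F (offs (Suc p) cs ! i) = \<beta> + 0 + i"
    using P1 lc(1) by simp
  have "(\<Sum>j=Suc k..<Suc k + length (pres cs). entry_rank F (hd (F ! j) - 1)) = Ds 0 cs + \<beta> * length (pres cs)"
    by (rule "1.IH"[OF w(2) lc(3) _ rk]) simp
  then show ?case using P1 by simp
next
  case (2 q)
  then show ?case by simp
next
  case (3 t q)
  have w: "wf t" using "3.prems"(1) by simp
  obtain u cs' where t: "t = Node u cs'" by (cases t)
  obtain c cs where cs': "cs' = c # cs" using w t by (cases cs') auto
  have lc: "F ! k = offs (Suc q) cs'" using loc_Cons[of F k] "3.prems"(2) t by simp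
  have IH: "(\<Sum>j=Suc k..<k + length (pre t). entry_rank F (hd (F ! j) - 1)) = Dt t + (b + m) * (length (pre t) - 1)"
    using "3.IH"[OF w, of k "b + m"] "3.prems" by simp
  have n1: "length (pre t) \<ge> 1" using t by simp
  have gk: "entry_rank F (hd (F ! k) - 1) = b + m" using lc cs' "3.prems"(4) by simp
  have "(\<Sum>j=k..<k + length (pre t). entry_rank F (hd (F ! j) - 1))
      = entry_rank F (hd (F ! k) - 1) + (\<Sum>j=Suc k..<k + length (pre t). entry_rank F (hd (F ! j) - 1))"
    using n1 by (intro sum.atLeast_Suc_lessThan) linarith
  also have "\<dots> = (b + m) * length (pre t) + Dt t"
    using IH gk n1 by (cases "length (pre t)") (auto simp: algebra_simps)
  finally show ?case by (simp add: nc_def algebra_simps)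
next
  case (4 q)
  then show ?case by simp
next
  case (5 c cs q)
  let ?q = "q + length (wo c) + 1" and ?lo = "length (preo c)" and ?ls = "length (pres cs)"
  have w: "wfo c" "wfs cs" using "5.prems"(1) by auto
  have la: "loc F k (tabo c q)" "loc F (k + ?lo) (tabs cs ?q)"
    using loc_append[of F k "tabo c q" "tabs cs ?q"] "5.prems"(2) by (auto simp: tab_length)
  have r0: "entry_rank F q = b + m" using "5.prems"(4)[rule_format, of 0] by simp
  have S1: "(\<Sum>j=k..<k + ?lo. entry_rank F (hd (F ! j) - 1)) = Do m c + b * ?lo"
    by (rule "5.IH"(1)[OF w(1) la(1) "5.prems"(3) r0])
  have rk: "\<forall>i<length cs. entry_rank F (offs ?q cs ! i) = b + Suc m + i"
  proof (intro allI impI)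
    fix i assume "i < length cs"
    then show "entry_rank F (offs ?q cs ! i) = b + Suc m + i"
      using "5.prems"(4)[rule_format, of "Suc i"] by simp
  qed
  have S2: "(\<Sum>j=k + ?lo..<k + ?lo + ?ls. entry_rank F (hd (F ! j) - 1)) = Ds (Suc m) cs + b * ?ls"
    by (rule "5.IH"(2)[OF w(2) la(2) _ rk]) (use "5.prems"(3) in simp)
  have "(\<Sum>j=k..<k + length (pres (c # cs)). entry_rank F (hd (F ! j) - 1))
     = (\<Sum>j=k..<k + ?lo. entry_rank F (hd (F ! j) - 1)) + (\<Sum>j=k + ?lo..<k + ?lo + ?ls. entry_rank F (hd (F ! j) - 1))"
    by (simp add: sum.atLeastLessThan_concat add.assoc)
  then show ?case using S1 S2 by (simp add: algebra_simps)
qed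

lemma depth_word: assumes "wf t" shows "depth (word t) = Dt t"
proof -
  let ?F = "tab t 0"
  have F: "filling (word t) = ?F" by (rule filling_word[OF assms])
  have d: "distinct (concat ?F)" using tab_ok(1)[OF assms, of 0] by simp
  have n: "length ?F = length (pre t)" by (simp add: tab_length)
  have n1: "length (pre t) \<ge> 1" by (cases t) simp
  have R: "(\<Sum>j=Suc 0..<0 + length (pre t). entry_rank ?F (hd (?F ! j) - 1)) = Dt t + 0 * (length (pre t) - 1)"
    using rank_tree(1)[OF d assms, of 0 0 0] by (simp add: loc_def tab_length)
  have "depth (word t) = (\<Sum>j = 0..<length ?F. if j = 0 then 0 else entry_rank ?F (hd (?F ! j) - 1))"
    unfolding depth_def depth_seq_def F Let_def by (auto simp: sum_list_sum_nth atLeast0LessThan intro!: sum.cong)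
  also have "\<dots> = (\<Sum>j = Suc 0..<length ?F. entry_rank ?F (hd (?F ! j) - 1))"
    using n n1 by (subst sum.atLeast_Suc_lessThan) auto
  also have "\<dots> = Dt t" using R n by simp
  finally show ?thesis .
qed

lemma refl_TT:
  assumes "wf tr" "pre tr \<in> aK a k"
  shows "wf (refl tr) \<and> pre (refl tr) \<in> aK a k"
proof -
  have P: "wf (refl tr)" "mset (pre (refl tr)) = mset (pre tr)" "hd (pre (refl tr)) = hd (pre tr)"
    using refl_props[of tr] assms(1) by auto
  obtain js where js: "pre tr = a # js" "mset js = mset k" using assms(2) by (auto simp: aK_def)
  obtain u cs where tr: "refl tr = Node u cs" by (cases "refl tr")
  have "pre (refl tr) = u # pres cs" using tr by simp
  moreover have "u = a" using P(3) js tr by simp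
  ultimately have "pre (refl tr) = a # pres cs" by simp
  moreover have "mset (pres cs) = mset k" using P(2) js \<open>pre (refl tr) = a # pres cs\<close> by simp
  ultimately show ?thesis using P(1) by (auto simp: aK_def)
qed

theorem theorem1p1:
  fixes k :: "nat list" and a :: nat and q t :: "'r::comm_ring_1"
  assumes "\<forall>x\<in>set k. x > 0" and "a > 0"
  shows "(\<Sum>\<pi>\<in>dyck_paths_aK a k. q ^ nat (area \<pi>) * t ^ depth \<pi>)
       = (\<Sum>\<pi>\<in>dyck_paths_aK a k. t ^ nat (area \<pi>) * q ^ depth \<pi>)"
proof -
  define TT where "TT = {tr. wf tr \<and> pre tr \<in> aK a k}"
  have img: "dyck_paths_aK a k = word ` TT"
  proof
    show "dyck_paths_aK a k \<subseteq> word ` TT"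
    proof
      fix w assume "w \<in> dyck_paths_aK a k"
      then obtain u where u: "u \<in> aK a k" "w \<in> dyck_paths u" by (auto simp: dyck_paths_aK_def)
      obtain js where js: "u = a # js" "mset js = mset k" using u(1) by (auto simp: aK_def)
      have "set js = set k" using js(2) by (metis set_mset_mset)
      then have pos: "\<forall>x\<in>set u. x > 0" using js(1) assms by auto
      obtain tr where tr: "wf tr" "word tr = w" using dyck_parse[OF u(2) _ pos] js(1) by auto
      have "pre tr = u" using u(2) tr word_ups(1)[of tr] by (auto simp: dyck_paths_def)
      then show "w \<in> word ` TT" using tr u(1) TT_def by auto
    qed
  next
    show "word ` TT \<subseteq> dyck_paths_aK a k"
      using word_dyck unfolding TT_def dyck_paths_aK_def by auto
  qed
  have inj: "inj_on word TT" unfolding TT_def by (auto intro!: inj_onI word_inj(1))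
  have sw: "(\<Sum>\<pi>\<in>dyck_paths_aK a k. f (nat (area \<pi>)) (depth \<pi>)) = (\<Sum>tr\<in>TT. f (Ar tr) (Dt tr))" for f :: "nat \<Rightarrow> nat \<Rightarrow> 'r"
  proof -
    have "(\<Sum>\<pi>\<in>dyck_paths_aK a k. f (nat (area \<pi>)) (depth \<pi>)) = (\<Sum>tr\<in>TT. f (nat (area (word tr))) (depth (word tr)))"
      unfolding img by (rule sum.reindex[OF inj, unfolded comp_def])
    also have "\<dots> = (\<Sum>tr\<in>TT. f (Ar tr) (Dt tr))"
      by (rule sum.cong) (auto simp: TT_def area_word' depth_word)
    finally show ?thesis .
  qed
  have "(\<Sum>tr\<in>TT. q ^ Ar tr * t ^ Dt tr) = (\<Sum>tr\<in>TT. q ^ Dt tr * t ^ Ar tr)"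
  proof -
    have R1: "refl (refl tr) = tr" if "tr \<in> TT" for tr using refl_props[of tr] by simp
    have R2: "refl tr \<in> TT" if "tr \<in> TT" for tr using refl_TT[of tr a k] that by (simp add: TT_def)
    have R3: "Ar (refl tr) = Dt tr \<and> Dt (refl tr) = Ar tr" if "tr \<in> TT" for tr
      using refl_props[of tr] that by (simp add: TT_def)
    show ?thesis by (rule sum.reindex_bij_witness[of _ refl refl]) (use R1 R2 R3 in auto)
  qed
  then show ?thesis
    using sw[of "\<lambda>x y. q ^ x * t ^ y"] sw[of "\<lambda>x y. t ^ x * q ^ y"] by (simp add: mult.commute)
qed

end
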